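(* Let $p\ge 2$. There is no pair $(\vec\psi, D)$, where $\vec\psi=(\psi_1,\dots,\psi_N)$, $N=\tfrac12(p+1)(p+2)$, is a basis of $\mathcal{T}(p)$ suitable for continuous finite elements (consisting of one vertex function for each of the three vertices, $p-1$ edge functions for each of the three edges, and $\tfrac12(p-1)(p-2)$ interior functions) and $D$ is a nonsingular real diagonal $N\times N$ matrix, such that $D$ is a $(p-1)$-exact pseudo-mass matrix for $\vec\psi$, i.e. such that for every $f\in\mathcal{T}(p-1)$ the vector $\vec u=D^{-1}\int_{\Omega_{ref}} f\,\vec\psi\,d\Omega$ satisfies $\vec u^{\,T}\vec\psi=f$ on $\Omega_{ref}$.
   Context: $\Omega_{ref}=\{(r,s): -1\le r,\ -1\le s,\ r+s\le 0\}$ with vertices $V_A=(-1,1)$, $V_B=(-1,-1)$, $V_C=(1,-1)$; edge $E_{\mathcal A}$ is the edge from $V_B$ to $V_C$ (opposite $V_A$), $E_{\mathcal B}$ the edge from $V_C$ to $V_A$ (opposite $V_B$), $E_{\mathcal C}$ the edge from $V_A$ to $V_B$ (opposite $V_C$). $\mathcal{T}(q)=\mathrm{span}\{r^ns^m: m,n\ge0,\ m+n\le q\}$. A vertex function (for a given vertex) is a function on $\Omega_{ref}$ that is nonzero at only that vertex among the three vertices and vanishes identically on the opposite edge. An edge function (for a given edge) is a function that is nonzero along only that edge and vanishes identically on the other two edges. An interior function is a nonzero function vanishing identically on all three edges. A nonsingular matrix $\underline{M}$ is called a $k$-exact pseudo-mass matrix for the basis $\vec\psi$ if $\vec u=\underline{M}^{-1}\int_{\Omega_{ref}}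 f\vec\psi\,d\Omega$ satisfies $\vec u^{\,T}\vec\psi=f$ for all $f\in\mathcal{T}(k)$. *)

theory Defs
  imports "HOL-Analysis.Analysis"
begin

definition Omega_ref :: "(real \<times> real) set" where
  "Omega_ref = {(r,s). -1 \<le> r \<and> -1 \<le> s \<and> r + s \<le> 0}"

definition V_A :: "real \<times> real" where "V_A = (-1, 1)"
definition V_B :: "real \<times> real" where "V_B = (-1, -1)"
definition V_C :: "real \<times> real" where "V_C = (1, -1)"

text \<open>Edge opposite V_A (from V_B to V_C), opposite V_B (from V_C to V_A),
  opposite V_C (from V_A to V_B).\<close>
definition E_A :: "(real \<times> real) set" where
  "E_A = {(r,s). s = -1 \<and> -1 \<le> r \<and> r \<le> 1}"
definition E_B :: "(real \<times> real) set" where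
  "E_B = {(r,s). r + s = 0 \<and> -1 \<le> r \<and> r \<le> 1}"
definition E_C :: "(real \<times> real) set" where
  "E_C = {(r,s). r = -1 \<and> -1 \<le> s \<and> s \<le> 1}"

definition T :: "nat \<Rightarrow> (real \<times> real \<Rightarrow> real) set" where
  "T q = {f. \<exists>c :: nat \<Rightarrow> nat \<Rightarrow> real. \<forall>r s.
            f (r,s) = (\<Sum>n\<le>q. \<Sum>m\<le>q - n. c n m * r ^ n * s ^ m)}"

definition vertex_fun :: "(real \<times> real) \<Rightarrow> (real \<times> real) set \<Rightarrow> (real \<times> real) set
    \<Rightarrow> (real \<times> real \<Rightarrow> real) \<Rightarrow> bool" where
  "vertex_fun v W E g \<longleftrightarrow> g v \<noteq> 0 \<and> (\<forall>w\<in>W. g w = 0) \<and> (\<forall>x\<in>E. g x = 0)"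

definition edge_fun :: "(real \<times> real) set \<Rightarrow> (real \<times> real) set \<Rightarrow> (real \<times> real) set
    \<Rightarrow> (real \<times> real \<Rightarrow> real) \<Rightarrow> bool" where
  "edge_fun E E1 E2 g \<longleftrightarrow> (\<exists>x\<in>E. g x \<noteq> 0) \<and> (\<forall>x\<in>E1. g x = 0) \<and> (\<forall>x\<in>E2. g x = 0)"

definition interior_fun :: "(real \<times> real \<Rightarrow> real) \<Rightarrow> bool" where
  "interior_fun g \<longleftrightarrow> (\<exists>x\<in>Omega_ref. g x \<noteq> 0) \<and>
      (\<forall>x\<in>E_A \<union> E_B \<union> E_C. g x = 0)"

definition is_basis_T :: "nat \<Rightarrow> nat \<Rightarrow> (nat \<Rightarrow> real \<times> real \<Rightarrow> real) \<Rightarrow> bool" where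
  "is_basis_T q N \<psi> \<longleftrightarrow>
     (\<forall>i<N. \<psi> i \<in> T q) \<and>
     (\<forall>c. (\<forall>x\<in>Omega_ref. (\<Sum>i<N. c i * \<psi> i x) = 0) \<longrightarrow> (\<forall>i<N. c i = 0)) \<and>
     (\<forall>f\<in>T q. \<exists>c. \<forall>x\<in>Omega_ref. (\<Sum>i<N. c i * \<psi> i x) = f x)"

definition suitable_basis :: "nat \<Rightarrow> (nat \<Rightarrow> real \<times> real \<Rightarrow> real) \<Rightarrow> bool" where
  "suitable_basis p \<psi> \<longleftrightarrow>
     (let N = (p + 1) * (p + 2) div 2 in
      is_basis_T p N \<psi> \<and>
      (\<exists>a b c :: nat. \<exists>IA IB IC I :: nat set.
         {a, b, c} \<union> IA \<union> IB \<union> IC \<union> I = {..<N} \<and>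
         card {a, b, c} = 3 \<and>
         card IA = p - 1 \<and> card IB = p - 1 \<and> card IC = p - 1 \<and>
         card I = (p - 1) * (p - 2) div 2 \<and>
         disjnt {a,b,c} IA \<and> disjnt {a,b,c} IB \<and> disjnt {a,b,c} IC \<and> disjnt {a,b,c} I \<and>
         disjnt IA IB \<and> disjnt IA IC \<and> disjnt IA I \<and>
         disjnt IB IC \<and> disjnt IB I \<and> disjnt IC I \<and>
         vertex_fun V_A {V_B, V_C} E_A (\<psi> a) \<and>
         vertex_fun V_B {V_A, V_C} E_B (\<psi> b) \<and>
         vertex_fun V_C {V_A, V_B} E_C (\<psi> c) \<and>
         (\<forall>i\<in>IA. edge_fun E_A E_B E_C (\<psi> i)) \<and>
         (\<forall>i\<in>IB. edge_fun E_B E_A E_C (\<psi> i)) \<and>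
         (\<forall>i\<in>IC. edge_fun E_C E_A E_B (\<psi> i)) \<and>
         (\<forall>i\<in>I. interior_fun (\<psi> i))))"

end

theory Submission
  imports Defs "HOL-Library.Function_Algebras" "HOL-Computational_Algebra.Polynomial"
begin


definition poly2 :: "(nat \<Rightarrow> nat \<Rightarrow> real) \<Rightarrow> nat \<Rightarrow> real \<times> real \<Rightarrow> real" where
  "poly2 c K x = (\<Sum>n\<le>K. \<Sum>m\<le>K. c n m * fst x ^ n * snd x ^ m)"

lemma T_iff: "f \<in> T q \<longleftrightarrow> (\<exists>c. (\<forall>n m. q < n + m \<longrightarrow> c n m = 0) \<and> f = poly2 c q)"
proof
  assume "f \<in> T q"
  then obtain c where c: "\<And>r s. f (r,s) = (\<Sum>n\<le>q. \<Sum>m\<le>q - n. c n m * r ^ n * s ^ m)"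
    unfolding T_def by auto
  define c' where "c' n m = (if n + m \<le> q then c n m else 0)" for n m
  have "f = poly2 c' q"
  proof (rule ext, clarify)
    fix r s
    have "(\<Sum>m\<le>q - n. c n m * r ^ n * s ^ m) = (\<Sum>m\<le>q. c' n m * r ^ n * s ^ m)" if "n \<le> q" for n
    proof -
      have "(\<Sum>m\<le>q - n. c n m * r ^ n * s ^ m) = (\<Sum>m\<le>q - n. c' n m * r ^ n * s ^ m)"
        by (rule sum.cong) (use that in \<open>auto simp: c'_def\<close>)
      also have "\<dots> = (\<Sum>m\<le>q. c' n m * r ^ n * s ^ m)"
        by (rule sum.mono_neutral_left) (auto simp: c'_def)
      finally show ?thesis .
    qed
    then show "f (r,s) = poly2 c' q (r,s)" unfolding poly2_def c by (auto intro: sum.cong)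
  qed
  then show "\<exists>c. (\<forall>n m. q < n + m \<longrightarrow> c n m = 0) \<and> f = poly2 c q"
    by (intro exI[of _ c']) (auto simp: c'_def)
next
  assume "\<exists>c. (\<forall>n m. q < n + m \<longrightarrow> c n m = 0) \<and> f = poly2 c q"
  then obtain c where c0: "\<And>n m. q < n + m \<Longrightarrow> c n m = 0" and f: "f = poly2 c q" by auto
  have "(\<Sum>m\<le>q. c n m * r ^ n * s ^ m) = (\<Sum>m\<le>q - n. c n m * r ^ n * s ^ m)" if "n \<le> q" for n r s
    by (rule sum.mono_neutral_right) (auto simp: c0)
  then show "f \<in> T q" unfolding T_def f poly2_def by (auto intro!: exI[of _ c] sum.cong)
qed

lemma poly2_extend:
  assumes "\<And>n m. q < n + m \<Longrightarrow> c n m = 0" "q \<le> K"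
  shows "poly2 c K = poly2 c q"
proof (rule ext)
  fix x
  have "(\<Sum>n\<le>K. \<Sum>m\<le>K. c n m * fst x ^ n * snd x ^ m) = (\<Sum>n\<le>K. \<Sum>m\<le>q. c n m * fst x ^ n * snd x ^ m)"
    by (rule sum.cong[OF refl], rule sum.mono_neutral_right) (use assms in auto)
  also have "\<dots> = (\<Sum>n\<le>q. \<Sum>m\<le>q. c n m * fst x ^ n * snd x ^ m)"
    by (rule sum.mono_neutral_right) (use assms in \<open>auto intro!: sum.neutral\<close>)
  finally show "poly2 c K x = poly2 c q x" unfolding poly2_def .
qed

lemma T_swap: "f \<in> T q \<Longrightarrow> (\<lambda>x. f (snd x, fst x)) \<in> T q"
  unfolding T_iff
proof clarify
  fix c :: "nat \<Rightarrow> nat \<Rightarrow> real" assume c0: "\<forall>n m. q < n + m \<longrightarrow> c n m = 0"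
  show "\<exists>c'. (\<forall>n m. q < n + m \<longrightarrow> c' n m = 0) \<and> (\<lambda>x. poly2 c q (snd x, fst x)) = poly2 c' q"
    apply (rule exI[of _ "\<lambda>n m. c m n"])
    using c0 apply (auto simp: poly2_def fun_eq_iff)
    apply (subst sum.swap) apply (auto intro!: sum.cong)
    done
qed

lemma T_add: "f \<in> T q \<Longrightarrow> g \<in> T q \<Longrightarrow> (\<lambda>x. f x + g x) \<in> T q"
  unfolding T_iff
proof clarify
  fix c c' :: "nat \<Rightarrow> nat \<Rightarrow> real" assume c0: "\<forall>n m. q < n + m \<longrightarrow> c n m = 0" and c0': "\<forall>n m. q < n + m \<longrightarrow> c' n m = 0"
  show "\<exists>c''. (\<forall>n m. q < n + m \<longrightarrow> c'' n m = 0) \<and> (\<lambda>x. poly2 c q x + poly2 c' q x) = poly2 c'' q"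
    apply (rule exI[of _ "\<lambda>n m. c n m + c' n m"])
    using c0 c0' by (auto simp: poly2_def fun_eq_iff distrib_right sum.distrib)
qed

lemma T_neg: "f \<in> T q \<Longrightarrow> (\<lambda>x. - f x) \<in> T q"
  unfolding T_iff
proof clarify
  fix c :: "nat \<Rightarrow> nat \<Rightarrow> real" assume c0: "\<forall>n m. q < n + m \<longrightarrow> c n m = 0"
  show "\<exists>c''. (\<forall>n m. q < n + m \<longrightarrow> c'' n m = 0) \<and> (\<lambda>x. - poly2 c q x) = poly2 c'' q"
    apply (rule exI[of _ "\<lambda>n m. - c n m"])
    using c0 by (auto simp: poly2_def fun_eq_iff sum_negf)
qed

lemma T_mult_fst: "f \<in> T q \<Longrightarrow> (\<lambda>x. fst x * f x) \<in> T (Suc q)"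
  unfolding T_iff
proof clarify
  fix c :: "nat \<Rightarrow> nat \<Rightarrow> real" assume c0: "\<forall>n m. q < n + m \<longrightarrow> c n m = 0"
  define c' where "c' n m = (if n = 0 then 0 else c (n - 1) m)" for n m
  have "(\<lambda>x. fst x * poly2 c q x) = poly2 c' (Suc q)"
  proof (rule ext)
    fix x
    have "poly2 c' (Suc q) x = (\<Sum>n\<le>q. \<Sum>m\<le>Suc q. c n m * fst x ^ Suc n * snd x ^ m)"
      unfolding poly2_def by (subst sum.atMost_Suc_shift) (simp add: c'_def)
    also have "\<dots> = (\<Sum>n\<le>q. \<Sum>m\<le>q. c n m * fst x ^ Suc n * snd x ^ m)"
      using c0 by (auto intro!: sum.cong)
    also have "\<dots> = fst x * poly2 c q x"
      unfolding poly2_def by (auto simp: sum_distrib_left intro!: sum.cong)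
    finally show "fst x * poly2 c q x = poly2 c' (Suc q) x" by simp
  qed
  then show "\<exists>c'. (\<forall>n m. Suc q < n + m \<longrightarrow> c' n m = 0) \<and> (\<lambda>x. fst x * poly2 c q x) = poly2 c' (Suc q)"
    using c0 by (intro exI[of _ c']) (auto simp: c'_def)
qed

lemma T_mult_snd: "f \<in> T q \<Longrightarrow> (\<lambda>x. snd x * f x) \<in> T (Suc q)"
proof -
  assume "f \<in> T q"
  then have "(\<lambda>x. f (snd x, fst x)) \<in> T q" by (rule T_swap)
  then have "(\<lambda>x. fst x * f (snd x, fst x)) \<in> T (Suc q)" by (rule T_mult_fst)
  then have "(\<lambda>x. fst (snd x, fst x) * f (snd (snd x, fst x), fst (snd x, fst x))) \<in> T (Suc q)"
    by (rule T_swap)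
  then show ?thesis by simp
qed

lemma T_monom: "k \<le> q \<Longrightarrow> (\<lambda>x. fst x ^ k) \<in> T q"
  unfolding T_iff
proof (rule exI[of _ "\<lambda>n m. if n = k \<and> m = 0 then 1 else 0"], intro conjI allI impI)
  assume k: "k \<le> q"
  show "(\<lambda>x. fst x ^ k) = poly2 (\<lambda>n m. if n = k \<and> m = 0 then 1 else 0) q"
  proof (rule ext)
    fix x :: "real \<times> real"
    have "(\<Sum>m\<le>q. (if n = k \<and> m = 0 then 1 else 0) * fst x ^ n * snd x ^ m) = (if n = k then fst x ^ k else 0)" for n
    proof (cases "n = k")
      case True
      have "(\<Sum>m\<le>q. (if n = k \<and> m = 0 then 1 else 0) * fst x ^ n * snd x ^ m) = (\<Sum>m\<le>q. if m = 0 then fst x ^ k else 0)"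
        by (rule sum.cong) (auto simp: True)
      then show ?thesis using True by simp
    qed simp
    then show "fst x ^ k = poly2 (\<lambda>n m. if n = k \<and> m = 0 then 1 else 0) q x"
      unfolding poly2_def using k by simp
  qed
qed auto

lemma poly2_cont: "continuous_on UNIV (poly2 c K)"
  unfolding poly2_def by (intro continuous_intros)

lemma T_cont: "f \<in> T q \<Longrightarrow> continuous_on UNIV f"
  unfolding T_iff using poly2_cont by auto

lemma poly2_as_P: "poly2 c K (r,s) = (\<Sum>m\<le>K. poly (\<Sum>n\<le>K. monom (c n m) n) r * s ^ m)"
  unfolding poly2_def by (subst sum.swap) (simp add: poly_sum poly_monom sum_distrib_right mult.assoc)

lemma T_div:
  assumes f: "f \<in> T (Suc q)" and z: "\<forall>s. -1 < s \<and> s < 1 \<longrightarrow> f (-1, s) = 0"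
  shows "\<exists>h \<in> T q. \<forall>r s. f (r,s) = (r+1) * h (r,s)"
proof -
  obtain c where c0: "\<And>n m. Suc q < n + m \<Longrightarrow> c n m = 0" and fc: "f = poly2 c (Suc q)"
    using f unfolding T_iff by auto
  define K where "K = Suc q"
  define P where "P m = (\<Sum>n\<le>K. monom (c n m) n)" for m
  have fP: "f (r,s) = (\<Sum>m\<le>K. poly (P m) r * s^m)" for r s
    unfolding fc P_def K_def by (rule poly2_as_P)
  have coeffP: "coeff (P m) n = (if n \<le> K then c n m else 0)" for n m
    unfolding P_def by (simp add: coeff_sum coeff_monom)
  have root: "poly (P m) (-1) = 0" if "m \<le> K" for m
  proof (rule ccontr)
    assume "poly (P m) (-1) \<noteq> 0"
    then have "finite {x. (\<Sum>i\<le>K. poly (P i) (-1) * x^i) = 0}"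
      using polyfun_finite_roots[where n=K and c="\<lambda>i. poly (P i) (-1)"] that by blast
    moreover have "{-1<..<1::real} \<subseteq> {x. (\<Sum>i\<le>K. poly (P i) (-1) * x^i) = 0}"
      using z fP by auto
    moreover have "\<not> finite {-1<..<1::real}" by (rule infinite_Ioo) simp
    ultimately show False using finite_subset by blast
  qed
  define Q where "Q m = P m div [:1,1:]" for m
  have PQ: "P m = [:1,1:] * Q m" if "m \<le> K" for m
  proof -
    have "[:1,1:] dvd P m" using root[OF that] poly_eq_0_iff_dvd[of "P m" "-1"] by simp
    then show ?thesis unfolding Q_def by (metis dvd_mult_div_cancel)
  qed
  have Qc0: "coeff (Q m) n = 0" if "m \<le> K" "q < n + m" for n m
  proof (cases "Q m = 0")
    case False
    have dP: "degree (P m) = degree (Q m) + 1"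
    proof -
      have "degree ([:1,1:] * Q m) = degree [:1,1::real:] + degree (Q m)"
        by (rule degree_mult_eq) (use False in auto)
      then show ?thesis using PQ[OF that(1)] by simp
    qed
    have "P m \<noteq> 0" using dP by auto
    then have "coeff (P m) (degree (P m)) \<noteq> 0" by simp
    have "degree (P m) + m \<le> K"
    proof (rule ccontr)
      assume "\<not> degree (P m) + m \<le> K"
      then have "c (degree (P m)) m = 0" using c0 unfolding K_def by simp
      then show False using \<open>coeff (P m) (degree (P m)) \<noteq> 0\<close> coeffP[of m "degree (P m)"] by (simp split: if_splits)
    qed
    then have "degree (Q m) < n" using dP that(2) unfolding K_def by simp
    then show ?thesis by (simp add: coeff_eq_0)
  qed simp
  define c' where "c' n m = (if m \<le> K then coeff (Q m) n else 0)" for n m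
  have QK: "Q K = 0" by (rule poly_eqI) (simp add: Qc0 K_def)
  have degQ: "degree (Q m) \<le> q" if "m \<le> K" for m
    by (rule degree_le) (use Qc0[OF that] in auto)
  have "f (r,s) = (r+1) * poly2 c' q (r,s)" for r s
  proof -
    have "f (r,s) = (\<Sum>m\<le>K. (r+1) * (poly (Q m) r * s^m))"
      unfolding fP by (rule sum.cong) (simp_all add: PQ mult.assoc algebra_simps)
    also have "\<dots> = (\<Sum>m\<le>q. (r+1) * (poly (Q m) r * s^m))"
      unfolding K_def by (simp add: QK[unfolded K_def])
    also have "\<dots> = (r+1) * poly2 c' q (r,s)"
      unfolding poly2_as_P sum_distrib_left
    proof (rule sum.cong[OF refl])
      fix m assume m: "m \<in> {..q}"
      have "(\<Sum>n\<le>q. monom (c' n m) n) = (\<Sum>n\<le>q. monom (coeff (Q m) n) n)"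
        using m by (auto simp: c'_def K_def)
      also have "\<dots> = Q m" using degQ[of m] m by (simp add: K_def poly_as_sum_of_monoms')
      finally show "(r + 1) * (poly (Q m) r * s ^ m) = (r + 1) * (poly (\<Sum>n\<le>q. monom (c' n m) n) r * s ^ m)"
        by simp
    qed
    finally show ?thesis .
  qed
  moreover have "poly2 c' q \<in> T q"
    unfolding T_iff by (rule exI[of _ c']) (auto simp: c'_def Qc0)
  ultimately show ?thesis by blast
qed



interpretation fv: vector_space "\<lambda>(c::real) (f::real\<Rightarrow>real) x. c * f x"
  by unfold_locales (auto simp: fun_eq_iff plus_fun_def algebra_simps)

lemma sum_fun_apply: "(sum f A) x = (\<Sum>a\<in>A. f a x)" for f :: "'a \<Rightarrow> real \<Rightarrow> real"
  by (induction A rule: infinite_finite_induct) (auto simp: plus_fun_def zero_fun_def)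

lemma count_indep:
  fixes u m :: "nat \<Rightarrow> real \<Rightarrow> real"
  assumes J: "finite J" "card J \<le> Suc K"
  and mind: "\<And>a. (\<And>t. (\<Sum>k\<le>K. a k * m k t) = 0) \<Longrightarrow> \<forall>k\<le>K. a k = 0"
  and span: "\<And>k. k \<le> K \<Longrightarrow> \<exists>e. \<forall>t. m k t = (\<Sum>j\<in>J. e j * u j t)"
  and e: "\<And>t. (\<Sum>j\<in>J. e j * u j t) = 0" and j0: "j0 \<in> J"
  shows "e j0 = 0"
proof (rule ccontr)
  assume ne: "e j0 \<noteq> 0"
  define M where "M = m ` {..K}"
  have inj: "inj_on m {..K}"
  proof (rule inj_onI, rule ccontr)
    fix k1 k2 assume k: "k1 \<in> {..K}" "k2 \<in> {..K}" "m k1 = m k2" "k1 \<noteq> k2"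
    define a where "a k = (if k = k1 then 1 else if k = k2 then -1 else (0::real))" for k
    have "(\<Sum>k\<le>K. a k * m k t) = 0" for t
    proof -
      have "(\<Sum>k\<le>K. a k * m k t) = (\<Sum>k\<in>{k1,k2}. a k * m k t)"
        by (rule sum.mono_neutral_right) (use k in \<open>auto simp: a_def\<close>)
      also have "\<dots> = 0" using k by (simp add: a_def)
      finally show ?thesis .
    qed
    then have "a k1 = 0" using mind k by blast
    then show False by (simp add: a_def)
  qed
  have cardM: "card M = Suc K" unfolding M_def using card_image[OF inj] by simp
  have indM: "fv.independent M"
  proof
    assume "fv.dependent M"
    then obtain w where w: "\<exists>v\<in>M. w v \<noteq> 0" "(\<Sum>v\<in>M. (\<lambda>x. w v * v x)) = 0"
      unfolding fv.dependent_finite[OF finite_imageI[of "{..K}" m, folded M_def, OF finite_atMost]]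
      by blast
    have h: "(\<Sum>k\<le>K. w (m k) * m k t) = 0" for t
    proof -
      have "(\<Sum>k\<le>K. w (m k) * m k t) = (\<Sum>v\<in>M. w v * v t)"
        unfolding M_def by (subst sum.reindex[OF inj]) simp
      also have "\<dots> = (\<Sum>v\<in>M. (\<lambda>x. w v * v x)) t" by (simp add: sum_fun_apply)
      also have "\<dots> = 0" using w(2) by simp
      finally show ?thesis .
    qed
    have "\<forall>k\<le>K. w (m k) = 0" by (rule mind[of "\<lambda>k. w (m k)"]) (rule h)
    then show False using w(1) unfolding M_def by auto
  qed
  define U' where "U' = u ` (J - {j0})"
  have uj0: "u j0 \<in> fv.span U'"
  proof -
    have "u j0 = (\<Sum>j\<in>J - {j0}. (\<lambda>x. (- e j / e j0) * u j x))"
    proof (rule ext)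
      fix t
      have "e j0 * u j0 t + (\<Sum>j\<in>J - {j0}. e j * u j t) = 0"
        using e[of t] sum.remove[OF J(1) j0, of "\<lambda>j. e j * u j t"] by simp
      then have "u j0 t = (\<Sum>j\<in>J - {j0}. e j * u j t) * (- 1 / e j0)"
        using ne by (simp add: field_simps)
      also have "\<dots> = (\<Sum>j\<in>J - {j0}. (- e j / e j0) * u j t)"
        unfolding sum_distrib_right by (rule sum.cong) (simp_all add: field_simps)
      finally show "u j0 t = (\<Sum>j\<in>J - {j0}. (\<lambda>x. (- e j / e j0) * u j x)) t"
        by (simp add: sum_fun_apply)
    qed
    also have "\<dots> \<in> fv.span U'"
      by (rule fv.span_sum, rule fv.span_scale, rule fv.span_base) (auto simp: U'_def)
    finally show ?thesis .
  qed
  have "u ` J \<subseteq> fv.span U'"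
  proof
    fix v assume "v \<in> u ` J"
    then obtain j where j: "j \<in> J" "v = u j" by auto
    show "v \<in> fv.span U'"
    proof (cases "j = j0")
      case True then show ?thesis using uj0 j by simp
    next
      case False then show ?thesis using j by (auto intro: fv.span_base simp: U'_def)
    qed
  qed
  then have spJ: "fv.span (u ` J) \<subseteq> fv.span U'"
    by (rule fv.span_minimal) simp
  have "M \<subseteq> fv.span (u ` J)"
  proof
    fix v assume "v \<in> M"
    then obtain k where k: "k \<le> K" "v = m k" unfolding M_def by auto
    obtain ee where ee: "\<forall>t. m k t = (\<Sum>j\<in>J. ee j * u j t)" using span[OF k(1)] by blast
    have "v = (\<Sum>j\<in>J. (\<lambda>x. ee j * u j x))"
      using ee k by (auto simp: fun_eq_iff sum_fun_apply)
    also have "\<dots> \<in> fv.span (u ` J)"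
      by (rule fv.span_sum, rule fv.span_scale, rule fv.span_base) auto
    finally show "v \<in> fv.span (u ` J)" .
  qed
  with spJ have "M \<subseteq> fv.span U'" by blast
  then have "card M \<le> card U'"
    using fv.independent_span_bound[of U' M] indM J(1) unfolding U'_def by auto
  also have "\<dots> \<le> card (J - {j0})" unfolding U'_def by (rule card_image_le) (use J in auto)
  also have "\<dots> = card J - 1" using j0 J by simp
  also have "\<dots> \<le> K" using J(2) by simp
  finally show False using cardM by simp
qed



lemma Omega_sub: "Omega_ref \<subseteq> cbox (-1,-1) (1,1)"
  unfolding Omega_ref_def by (auto simp: cbox_Pair_eq)

lemma Omega_closed: "closed Omega_ref"
proof -
  have "Omega_ref = {x. -1 \<le> fst x} \<inter> {x. -1 \<le> snd x} \<inter> {x. fst x + snd x \<le> 0}"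
    unfolding Omega_ref_def by auto
  moreover have "closed \<dots>"
    by (intro closed_Int closed_Collect_le continuous_intros)
  ultimately show ?thesis by simp
qed

lemma Omega_leb: "Omega_ref \<in> sets lebesgue"
proof -
  have "compact Omega_ref"
    using Omega_closed Omega_sub bounded_cbox bounded_subset by (metis compact_eq_bounded_closed)
  then show ?thesis using lmeasurable_compact fmeasurableD by blast
qed

lemma integrable_Omega:
  fixes g :: "real \<times> real \<Rightarrow> real"
  assumes "continuous_on UNIV g"
  shows "g integrable_on Omega_ref"
proof -
  have "g absolutely_integrable_on cbox (-1,-1) (1,1)"
    by (rule absolutely_integrable_continuous) (rule continuous_on_subset[OF assms], simp)
  then have "g absolutely_integrable_on Omega_ref"
    by (rule set_integrable_subset[OF _ Omega_leb Omega_sub])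
  then show ?thesis by (simp add: absolutely_integrable_on_def)
qed

lemma pos_integral:
  fixes g :: "real \<times> real \<Rightarrow> real"
  assumes cont: "continuous_on UNIV g" and nonneg: "\<forall>x\<in>Omega_ref. 0 \<le> g x"
    and y0: "-1 < a" "-1 < b" "a + b < 0" "0 < g (a,b)"
  shows "0 < integral Omega_ref g"
proof -
  have "isCont g (a,b)" using cont by (simp add: continuous_on_eq_continuous_at)
  then obtain d where d: "d > 0" "\<And>y. dist y (a,b) < d \<Longrightarrow> dist (g y) (g (a,b)) < g (a,b) / 2"
    using y0(4) unfolding continuous_at_eps_delta by (metis half_gt_zero)
  define e where "e = min (d/4) (min ((a+1)/2) (min ((b+1)/2) (-(a+b)/4)))"
  have e: "e > 0" "e \<le> d/4" "e \<le> (a+1)/2" "e \<le> (b+1)/2" "e \<le> -(a+b)/4"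
    unfolding e_def using d y0 by (auto simp: min_def)
  define B where "B = cbox (a - e, b - e) (a + e, b + e)"
  have Bmem: "x \<in> B \<longleftrightarrow> a - e \<le> fst x \<and> fst x \<le> a + e \<and> b - e \<le> snd x \<and> snd x \<le> b + e" for x
    unfolding B_def by (cases x) (auto simp: cbox_Pair_eq)
  have BO: "B \<subseteq> Omega_ref"
    using e unfolding Omega_ref_def by (auto simp: Bmem)
  have gB: "g y \<ge> g (a,b) / 2" if "y \<in> B" for y
  proof -
    obtain r s where y: "y = (r,s)" by (cases y)
    have "dist y (a,b) \<le> dist r a + dist s b"
      unfolding y dist_Pair_Pair by (rule sqrt_sum_squares_le_sum) simp_all
    also have "\<dots> \<le> 2 * e" using that unfolding Bmem y dist_real_def by auto
    also have "\<dots> < d" using e d by simp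
    finally have "dist (g y) (g (a,b)) < g (a,b) / 2" by (rule d(2))
    then show ?thesis using abs_ge_minus_self[of "g y - g (a,b)"] unfolding dist_real_def by linarith
  qed
  have intB: "g integrable_on B" unfolding B_def
    by (rule integrable_continuous) (rule continuous_on_subset[OF cont], simp)
  have "0 < Henstock_Kurzweil_Integration.content B * (g (a,b) / 2)"
    using e y0 unfolding B_def by (intro mult_pos_pos content_pos_lt) (auto simp: Basis_prod_def)
  also have "Henstock_Kurzweil_Integration.content B * (g (a,b) / 2) = integral B (\<lambda>x. g (a,b) / 2)" unfolding B_def by simp
  also have "\<dots> \<le> integral B g"
    by (rule integral_le) (use intB gB in \<open>auto simp: B_def\<close>)
  also have "\<dots> \<le> integral Omega_ref g"
    by (rule integral_subset_le[OF BO intB integrable_Omega[OF cont] nonneg])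
  finally show ?thesis .
qed



theorem theorem3p2:
  fixes p :: nat
  assumes "p \<ge> 2"
  shows "\<not> (\<exists>(\<psi> :: nat \<Rightarrow> real \<times> real \<Rightarrow> real) (d :: nat \<Rightarrow> real).
            suitable_basis p \<psi> \<and>
            (\<forall>i < (p + 1) * (p + 2) div 2. d i \<noteq> 0) \<and>
            (\<forall>f \<in> T (p - 1). \<forall>x \<in> Omega_ref.
               (\<Sum>i < (p + 1) * (p + 2) div 2.
                  (integral Omega_ref (\<lambda>y. f y * \<psi> i y) / d i) * \<psi> i x) = f x))"
proof
  define N where "N = (p + 1) * (p + 2) div 2"
  assume "\<exists>(\<psi> :: nat \<Rightarrow> real \<times> real \<Rightarrow> real) (d :: nat \<Rightarrow> real).
            suitable_basis p \<psi> \<and>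
            (\<forall>i < (p + 1) * (p + 2) div 2. d i \<noteq> 0) \<and>
            (\<forall>f \<in> T (p - 1). \<forall>x \<in> Omega_ref.
               (\<Sum>i < (p + 1) * (p + 2) div 2.
                  (integral Omega_ref (\<lambda>y. f y * \<psi> i y) / d i) * \<psi> i x) = f x)"
  then obtain \<psi> :: "nat \<Rightarrow> real \<times> real \<Rightarrow> real" and d :: "nat \<Rightarrow> real" where
    sb: "suitable_basis p \<psi>" and dnz: "\<forall>i<N. d i \<noteq> 0" and
    ex: "\<forall>f \<in> T (p - 1). \<forall>x \<in> Omega_ref.
               (\<Sum>i<N. (integral Omega_ref (\<lambda>y. f y * \<psi> i y) / d i) * \<psi> i x) = f x"
    unfolding N_def by blast
  from sb have basis: "is_basis_T p N \<psi>" unfolding suitable_basis_def Let_def N_def by blast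
  from sb obtain a b c IA IB IC I where
    part: "{a, b, c} \<union> IA \<union> IB \<union> IC \<union> I = {..<N}" and
    c3: "card {a, b, c} = 3" and cIB: "card IB = p - 1" and
    dj: "disjnt {a,b,c} IB" and
    vb: "vertex_fun V_B {V_A, V_C} E_B (\<psi> b)" and
    eA: "\<forall>i\<in>IA. edge_fun E_A E_B E_C (\<psi> i)" and
    eB: "\<forall>i\<in>IB. edge_fun E_B E_A E_C (\<psi> i)" and
    eC: "\<forall>i\<in>IC. edge_fun E_C E_A E_B (\<psi> i)" and
    iI: "\<forall>i\<in>I. interior_fun (\<psi> i)"
    unfolding suitable_basis_def Let_def N_def by metis
  have "IB \<noteq> {}" using cIB assms by auto
  then obtain i0 where i0: "i0 \<in> IB" by blast
  have i0N: "i0 < N" using part i0 by blast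
  have psiT: "\<psi> i \<in> T p" if "i < N" for i using basis that unfolding is_basis_T_def by blast
  have EB_O: "E_B \<subseteq> Omega_ref" unfolding E_B_def Omega_ref_def by auto
  obtain p2 where p2: "p = Suc (Suc p2)" using assms by (metis add_2_eq_Suc le_Suc_ex)
  have ed: "edge_fun E_B E_A E_C (\<psi> i0)" using eB i0 by blast
  obtain h1 where h1: "h1 \<in> T (Suc p2)" "\<And>r s. \<psi> i0 (r,s) = (r+1) * h1 (r,s)"
  proof -
    have "\<psi> i0 (-1, s) = 0" if "-1 < s \<and> s < 1" for s
      using ed that unfolding edge_fun_def E_C_def by auto
    then show ?thesis using T_div[of "\<psi> i0" "Suc p2"] psiT[OF i0N] that p2 by auto
  qed
  have h1z: "h1 (s, -1) = 0" if "-1 < s \<and> s < 1" for s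
  proof -
    have "\<psi> i0 (s, -1) = 0" using ed that unfolding edge_fun_def E_A_def by auto
    then show ?thesis using h1(2)[of s "-1"] that by simp
  qed
  obtain h2 where h2: "h2 \<in> T p2" "\<And>r s. h1 (s,r) = (r+1) * h2 (r,s)"
  proof -
    have "(\<lambda>x. h1 (snd x, fst x)) \<in> T (Suc p2)" by (rule T_swap[OF h1(1)])
    moreover have "\<forall>s. -1 < s \<and> s < 1 \<longrightarrow> (\<lambda>x. h1 (snd x, fst x)) (-1, s) = 0"
      using h1z by simp
    ultimately show ?thesis using T_div[of "\<lambda>x. h1 (snd x, fst x)" p2] that by auto
  qed
  define q where "q = (\<lambda>x. h2 (snd x, fst x))"
  have qT: "q \<in> T p2" unfolding q_def by (rule T_swap[OF h2(1)])
  have fac: "\<psi> i0 (r,s) = (r+1) * (s+1) * q (r,s)" for r s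
    using h1(2)[of r s] h2(2)[of r s] h2(2)[of s r] unfolding q_def by simp
  define f where "f = (\<lambda>x. (- fst x - snd x) * q x)"
  have fT: "f \<in> T (p - 1)"
  proof -
    have "(\<lambda>x. - (fst x * q x) + - (snd x * q x)) \<in> T (Suc p2)"
      by (intro T_add T_neg T_mult_fst T_mult_snd qT)
    moreover have "(\<lambda>x. - (fst x * q x) + - (snd x * q x)) = f"
      unfolding f_def by (auto simp: fun_eq_iff algebra_simps)
    ultimately show ?thesis using p2 by simp
  qed
  define co where "co i = integral Omega_ref (\<lambda>y. f y * \<psi> i y) / d i" for i
  have exf: "\<And>x. x \<in> Omega_ref \<Longrightarrow> (\<Sum>i<N. co i * \<psi> i x) = f x"
    using ex fT unfolding co_def by blast
  define J where "J = insert a (insert c IB)"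
  have finIB: "finite IB" by (rule finite_subset[of _ "{..<N}"]) (use part in auto)
  have ac1: "a \<noteq> c" using c3 by (cases "a = c"; cases "a = b"; simp add: card_insert_if)
  have ac: "a \<noteq> c" "a \<notin> IB" "c \<notin> IB" using ac1 dj unfolding disjnt_def by auto
  have finJ: "finite J" unfolding J_def using finIB by simp
  have cardJ: "card J = Suc p" unfolding J_def using ac finIB cIB assms by simp
  have JN: "J \<subseteq> {..<N}" unfolding J_def using part by blast
  have van: "\<psi> i x = 0" if "i \<in> {..<N} - J" "x \<in> E_B" for i x
  proof -
    have "i = b \<or> i \<in> IA \<or> i \<in> IC \<or> i \<in> I" using that part unfolding J_def by blast
    then show ?thesis
    proof (elim disjE)
      assume "i = b" then show ?thesis using vb that(2) unfolding vertex_fun_def by blast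
    next
      assume "i \<in> IA" then show ?thesis using eA that(2) unfolding edge_fun_def by blast
    next
      assume "i \<in> IC" then show ?thesis using eC that(2) unfolding edge_fun_def by blast
    next
      assume "i \<in> I" then show ?thesis using iI that(2) unfolding interior_fun_def by blast
    qed
  qed
  have restr: "(\<Sum>i<N. e i * \<psi> i x) = (\<Sum>j\<in>J. e j * \<psi> j x)" if "x \<in> E_B" for e x
    by (rule sum.mono_neutral_right) (use JN van that in auto)
  define u where "u j t = (if -1 \<le> t \<and> t \<le> 1 then \<psi> j (t, -t) else 0)" for j t
  define m where "m k t = (if -1 \<le> t \<and> t \<le> 1 then t ^ k else (0::real))" for k t
  have EBt: "(t, -t) \<in> E_B" if "-1 \<le> t \<and> t \<le> 1" for t
    using that unfolding E_B_def by auto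
  have "co i0 = 0"
  proof (rule count_indep[where u=u and m=m and K=p and J=J and e=co])
    show "finite J" by (rule finJ)
    show "card J \<le> Suc p" using cardJ by simp
    show "i0 \<in> J" using i0 unfolding J_def by simp
  next
    fix aa :: "nat \<Rightarrow> real" assume h: "\<And>t. (\<Sum>k\<le>p. aa k * m k t) = 0"
    show "\<forall>k\<le>p. aa k = 0"
    proof (rule ccontr)
      assume "\<not> (\<forall>k\<le>p. aa k = 0)"
      then have "finite {x. (\<Sum>i\<le>p. aa i * x^i) = 0}"
        using polyfun_finite_roots[where n=p and c=aa] by blast
      moreover have "{-1<..<1::real} \<subseteq> {x. (\<Sum>i\<le>p. aa i * x^i) = 0}"
      proof
        fix x :: real assume x: "x \<in> {-1<..<1}"
        have "(\<Sum>k\<le>p. aa k * m k x) = 0" by (rule h)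
        then show "x \<in> {x. (\<Sum>i\<le>p. aa i * x^i) = 0}" using x unfolding m_def by simp
      qed
      moreover have "\<not> finite {-1<..<1::real}" by (rule infinite_Ioo) simp
      ultimately show False using finite_subset by blast
    qed
  next
    fix k assume k: "k \<le> p"
    have mk: "(\<lambda>x. fst x ^ k) \<in> T p" by (rule T_monom[OF k])
    have "\<forall>f\<in>T p. \<exists>c. \<forall>x\<in>Omega_ref. (\<Sum>i<N. c i * \<psi> i x) = f x"
      using basis unfolding is_basis_T_def by blast
    from bspec[OF this mk] obtain e where e: "\<forall>x\<in>Omega_ref. (\<Sum>i<N. e i * \<psi> i x) = fst x ^ k"
      by auto
    have "m k t = (\<Sum>j\<in>J. e j * u j t)" for t
    proof (cases "-1 \<le> t \<and> t \<le> 1")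
      case True
      then have "m k t = (\<Sum>i<N. e i * \<psi> i (t,-t))" using e EBt[OF True] EB_O unfolding m_def by auto
      also have "\<dots> = (\<Sum>j\<in>J. e j * \<psi> j (t,-t))" by (rule restr[OF EBt[OF True]])
      finally show ?thesis unfolding u_def using True by simp
    next
      case False then have "\<forall>j. u j t = 0" "m k t = 0" unfolding u_def m_def by auto
      then show ?thesis by simp
    qed
    then show "\<exists>e. \<forall>t. m k t = (\<Sum>j\<in>J. e j * u j t)" by blast
  next
    fix t
    show "(\<Sum>j\<in>J. co j * u j t) = 0"
    proof (cases "-1 \<le> t \<and> t \<le> 1")
      case True
      have "(\<Sum>j\<in>J. co j * u j t) = (\<Sum>j\<in>J. co j * \<psi> j (t,-t))" unfolding u_def using True by simp
      also have "\<dots> = (\<Sum>i<N. co i * \<psi> i (t,-t))" by (rule restr[OF EBt[OF True], symmetric])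
      also have "\<dots> = f (t,-t)" using exf EBt[OF True] EB_O by auto
      also have "\<dots> = 0" unfolding f_def by simp
      finally show ?thesis .
    next
      case False then have "\<forall>j. u j t = 0" unfolding u_def by auto
      then show ?thesis by simp
    qed
  qed
  then have int0: "integral Omega_ref (\<lambda>y. f y * \<psi> i0 y) = 0"
    using dnz i0N unfolding co_def by simp
  obtain x0 where x0: "x0 \<in> E_B" "\<psi> i0 x0 \<noteq> 0" using ed unfolding edge_fun_def by blast
  obtain t where t: "x0 = (t, -t)" "-1 \<le> t" "t \<le> 1"
  proof -
    obtain r s where rs: "x0 = (r,s)" by (cases x0)
    then have "s = -r" "-1 \<le> r" "r \<le> 1" using x0(1) unfolding E_B_def by auto
    then show ?thesis using that rs by simp
  qed
  have tq: "t \<noteq> -1" "t \<noteq> 1" "q x0 \<noteq> 0" using x0(2) fac[of t "-t"] t(1) by auto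
  have "isCont q x0" using T_cont[OF qT] by (metis continuous_on_eq_continuous_at open_UNIV UNIV_I)
  then obtain \<delta> where \<delta>: "\<delta> > 0" "\<And>y. dist y x0 < \<delta> \<Longrightarrow> dist (q y) (q x0) < \<bar>q x0\<bar>"
    using tq(3) unfolding continuous_at_eps_delta by (metis zero_less_abs_iff)
  define \<eta> where "\<eta> = min (\<delta>/4) (min ((1+t)/2) ((1-t)/2))"
  have \<eta>: "\<eta> > 0" "\<eta> \<le> \<delta>/4" "\<eta> \<le> (1+t)/2" "\<eta> \<le> (1-t)/2"
    unfolding \<eta>_def using \<delta> t tq by (auto simp: min_def)
  have "dist (t - \<eta>, -t - \<eta>) x0 \<le> dist (t - \<eta>) t + dist (-t-\<eta>) (-t)"
    unfolding t(1) dist_Pair_Pair by (rule sqrt_sum_squares_le_sum) simp_all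
  also have "\<dots> < \<delta>" using \<eta> \<delta> by (simp add: dist_real_def)
  finally have "dist (q (t - \<eta>, -t - \<eta>)) (q x0) < \<bar>q x0\<bar>" by (rule \<delta>(2))
  then have qy: "q (t - \<eta>, -t - \<eta>) \<noteq> 0" by (auto simp: dist_real_def)
  have gform: "f y * \<psi> i0 y = (- fst y - snd y) * (fst y + 1) * (snd y + 1) * (q y)^2" for y
    unfolding f_def using fac[of "fst y" "snd y"] by (simp add: power2_eq_square)
  have "0 < integral Omega_ref (\<lambda>y. f y * \<psi> i0 y)"
  proof (rule pos_integral)
    show "continuous_on UNIV (\<lambda>y. f y * \<psi> i0 y)"
      using T_cont[OF fT] T_cont[OF psiT[OF i0N]] by (intro continuous_intros)
    show "\<forall>x\<in>Omega_ref. 0 \<le> f x * \<psi> i0 x"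
      unfolding gform Omega_ref_def by (auto intro!: mult_nonneg_nonneg)
    show "-1 < t - \<eta>" "-1 < -t - \<eta>" "t - \<eta> + (-t - \<eta>) < 0" using \<eta> by auto
    show "0 < f (t - \<eta>, - t - \<eta>) * \<psi> i0 (t - \<eta>, - t - \<eta>)"
      unfolding gform using \<eta> qy by (auto intro!: mult_pos_pos)
  qed
  then show False using int0 by simp
qed


end
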